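(* Let $x$ be a reference grid point in $\Omega=(-1,1)$ and $\phi$ a twice differentiable function defined in a neighborhood of the grid. Assume $K=\mathcal O(h^{-\alpha})$ and $L=\mathcal O(h^{-\beta})$ with $K\sqrt L\ge1$, $\alpha\in(0,1)$ and $\beta\in(0,2)$. Then the scheme $F^{1D,e,\delta}$ is consistent with $F^{1D}$ and has accuracy \[ F^{1D,e,\delta}[\phi](x)-F^{1D}[\phi](x)=\mathcal O\left(h^{1-\alpha}+h^{2-\beta}+h^{\min(2\alpha,\beta/2)}\right). \] Moreover, the optimal choice of $\alpha$ and $\beta$ (maximizing the resulting order) is $\alpha=1/3$, $\beta=4/3$, in which case the accuracy is $\mathcal O(h^{2/3})$.
   Context: $F^{1D}[u]=(u_x^2u_{xx})^{1/3}$ (real cube root). With $A(p,q)=(p^2q)^{1/3}$, $A^\delta(p,q)=\operatorname{sgn}(q)\min(\lvert A(p,q)\rvert,K\lvert p\rvert,L\lvert q\rvert)$ ($\operatorname{sgn}(0)=0$), $A^{\delta,\pm}(p,q)=A^\delta(p^\pm,q^\pm)$ where $x^+=\max(x,0)$, $x^-=\min(x,0)$, the scheme on the uniform grid of spacing $h$ is $-F^{1D,e,\delta}[u]=A^{\delta,+}(\lvert u_x^h\rvert^+,-u_{xx}^h)+A^{\delta,-}(-\lvert u_x^h\rvert^-,-u_{xx}^h)$, with $\lvert u_x^h\rvert^+=\max\{\frac{u(x)-u(x+h)}h,\frac{u(x)-u(x-h)}h,0\}$, $-\lvert u_x^h\rvert^-=\min\{\frac{u(x)-u(x+h)}h,\frac{u(x)-u(x-h)}h,0\}$,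 $u_{xx}^h=\frac{u(x+h)-2u(x)+u(x-h)}{h^2}$. Consistency with $F$ means $\lim_{h\to0,\,y\to x}F^h[\phi](y)=F[\phi](x)$ for smooth $\phi$.
   Formalization: $\phi$ is infinitely differentiable on an open neighbourhood of x instead of twice differentiable, and K and L are positive, with K between constant multiples of $h^{-\alpha}$ and L between constant multiples of $h^{-\beta}$ for small h. Apart from conventions, each condition added here is assumed in the paper as well or is needed for the statement above to hold. *)

theory Defs
  imports "HOL-Analysis.Analysis" "HOL-Library.Landau_Symbols"
begin

definition F1D :: "(real \<Rightarrow> real) \<Rightarrow> real \<Rightarrow> real" where
  "F1D u x = root 3 ((deriv u x)^2 * deriv (deriv u) x)"

definition Aop :: "real \<Rightarrow> real \<Rightarrow> real" where
  "Aop p q = root 3 (p^2 * q)"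

definition Adelta :: "real \<Rightarrow> real \<Rightarrow> real \<Rightarrow> real \<Rightarrow> real" where
  "Adelta K L p q = sgn q * min \<bar>Aop p q\<bar> (min (K * \<bar>p\<bar>) (L * \<bar>q\<bar>))"

definition ppart :: "real \<Rightarrow> real" where "ppart x = max x 0"
definition npart :: "real \<Rightarrow> real" where "npart x = min x 0"

definition Adelta_plus :: "real \<Rightarrow> real \<Rightarrow> real \<Rightarrow> real \<Rightarrow> real" where
  "Adelta_plus K L p q = Adelta K L (ppart p) (ppart q)"
definition Adelta_minus :: "real \<Rightarrow> real \<Rightarrow> real \<Rightarrow> real \<Rightarrow> real" where
  "Adelta_minus K L p q = Adelta K L (npart p) (npart q)"

definition ux_abs_plus :: "(real \<Rightarrow> real) \<Rightarrow> real \<Rightarrow> real \<Rightarrow> real" where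
  "ux_abs_plus u h x = max (max ((u x - u (x + h)) / h) ((u x - u (x - h)) / h)) 0"

definition ux_abs_minus_neg :: "(real \<Rightarrow> real) \<Rightarrow> real \<Rightarrow> real \<Rightarrow> real" where
  "ux_abs_minus_neg u h x = min (min ((u x - u (x + h)) / h) ((u x - u (x - h)) / h)) 0"

definition uxx :: "(real \<Rightarrow> real) \<Rightarrow> real \<Rightarrow> real \<Rightarrow> real" where
  "uxx u h x = (u (x + h) - 2 * u x + u (x - h)) / h^2"

definition Fscheme :: "real \<Rightarrow> real \<Rightarrow> real \<Rightarrow> (real \<Rightarrow> real) \<Rightarrow> real \<Rightarrow> real" where
  "Fscheme K L h u x =
     - (Adelta_plus K L (ux_abs_plus u h x) (- uxx u h x)
        + Adelta_minus K L (ux_abs_minus_neg u h x) (- uxx u h x))"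

definition smooth_on :: "(real \<Rightarrow> real) \<Rightarrow> real set \<Rightarrow> bool" where
  "smooth_on f U \<longleftrightarrow> (\<forall>k. \<forall>y\<in>U. ((deriv ^^ k) f) differentiable (at y))"

text \<open>Order of accuracy of the error bound h^(1-a) + h^(2-b) + h^min(2a, b/2).\<close>
definition acc_order :: "real \<Rightarrow> real \<Rightarrow> real" where
  "acc_order a b = min (1 - a) (min (2 - b) (min (2 * a) (b / 2)))"

end

theory Submission
  imports Defs
begin


lemma taylor_est:
  fixes f :: "real \<Rightarrow> real"
  assumes h: "h > 0"
    and D: "\<forall>k t. y-h \<le> t \<and> t \<le> y+h \<longrightarrow> DERIV ((deriv^^k) f) t :> (deriv^^Suc k) f t"
    and B: "\<forall>t. y-h \<le> t \<and> t \<le> y+h \<longrightarrow> \<bar>(deriv^^2) f t\<bar> \<le> M \<and> \<bar>(deriv^^4) f t\<bar> \<le> M"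
  shows "\<bar>(f y - f (y+h))/h + deriv f y\<bar> \<le> M*h"
    and "\<bar>(f y - f (y-h))/h - deriv f y\<bar> \<le> M*h"
    and "\<bar>uxx f h y - (deriv^^2) f y\<bar> \<le> M*h^2"
proof -
  have D2: "\<forall>m t. m < n \<and> y-h \<le> t \<and> t \<le> y+h \<longrightarrow> DERIV ((\<lambda>k. (deriv^^k) f) m) t :> (\<lambda>k. (deriv^^k) f) (Suc m) t" for n
    using D by blast
  have d0: "(\<lambda>k. (deriv^^k) f) 0 = f" by simp
  obtain t1 where t1: "y < t1 \<and> t1 < y+h"
    "f (y+h) = (\<Sum>m<2. ((deriv^^m) f y / fact m) * (y+h - y)^m) + ((deriv^^2) f t1 / fact 2) * (y+h-y)^2"
    using Taylor[of 2 "\<lambda>k. (deriv^^k) f" f "y-h" "y+h" y "y+h", OF _ d0 D2] h by auto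
  obtain t2 where t2: "y-h < t2 \<and> t2 < y"
    "f (y-h) = (\<Sum>m<2. ((deriv^^m) f y / fact m) * (y-h - y)^m) + ((deriv^^2) f t2 / fact 2) * (y-h-y)^2"
    using Taylor[of 2 "\<lambda>k. (deriv^^k) f" f "y-h" "y+h" y "y-h", OF _ d0 D2] h by auto
  obtain t3 where t3: "y < t3 \<and> t3 < y+h"
    "f (y+h) = (\<Sum>m<4. ((deriv^^m) f y / fact m) * (y+h - y)^m) + ((deriv^^4) f t3 / fact 4) * (y+h-y)^4"
    using Taylor[of 4 "\<lambda>k. (deriv^^k) f" f "y-h" "y+h" y "y+h", OF _ d0 D2] h by auto
  obtain t4 where t4: "y-h < t4 \<and> t4 < y"
    "f (y-h) = (\<Sum>m<4. ((deriv^^m) f y / fact m) * (y-h - y)^m) + ((deriv^^4) f t4 / fact 4) * (y-h-y)^4"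
    using Taylor[of 4 "\<lambda>k. (deriv^^k) f" f "y-h" "y+h" y "y-h", OF _ d0 D2] h by auto
  have b1: "\<bar>(deriv^^2) f t1\<bar> \<le> M" "\<bar>(deriv^^2) f t2\<bar> \<le> M"
    "\<bar>(deriv^^4) f t3\<bar> \<le> M" "\<bar>(deriv^^4) f t4\<bar> \<le> M"
    using B t1 t2 t3 t4 by auto
  have s2: "(\<Sum>m<2. g m) = g 0 + g 1" for g :: "nat \<Rightarrow> real"
    by (simp add: eval_nat_numeral)
  have s4: "(\<Sum>m<4. g m) = g 0 + g 1 + g 2 + g 3" for g :: "nat \<Rightarrow> real"
    by (simp add: eval_nat_numeral)
  have e1: "(f y - f (y+h))/h + deriv f y = - (deriv^^2) f t1 / 2 * h"
    using t1(2) h by (simp add: s2 field_simps power2_eq_square)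
  have e2: "(f y - f (y-h))/h - deriv f y = - (deriv^^2) f t2 / 2 * h"
    using t2(2) h by (simp add: s2 field_simps power2_eq_square)
  have e3: "uxx f h y - (deriv^^2) f y = ((deriv^^4) f t3 + (deriv^^4) f t4) / 24 * h^2"
    using t3(2) t4(2) h unfolding uxx_def
    by (simp add: s4 field_simps eval_nat_numeral fact_numeral)
  have Mnn: "M \<ge> 0" using b1 by linarith
  show "\<bar>(f y - f (y+h))/h + deriv f y\<bar> \<le> M*h"
    unfolding e1 using b1 h Mnn by (simp add: abs_mult mult_right_mono)
  show "\<bar>(f y - f (y-h))/h - deriv f y\<bar> \<le> M*h"
    unfolding e2 using b1 h Mnn by (simp add: abs_mult mult_right_mono)
  have "\<bar>(deriv^^4) f t3 + (deriv^^4) f t4\<bar> / 24 \<le> M"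
  proof -
    have "\<bar>(deriv^^4) f t3 + (deriv^^4) f t4\<bar> \<le> 2*M"
      using b1(3,4) abs_triangle_ineq[of "(deriv^^4) f t3" "(deriv^^4) f t4"] by linarith
    then show ?thesis using Mnn by simp
  qed
  then show "\<bar>uxx f h y - (deriv^^2) f y\<bar> \<le> M*h^2"
  proof -
    have "\<bar>((deriv^^4) f t3 + (deriv^^4) f t4) / 24 * h^2\<bar> = \<bar>(deriv^^4) f t3 + (deriv^^4) f t4\<bar> / 24 * h^2"
      by (simp add: abs_mult)
    also have "\<dots> \<le> M * h^2" by (rule mult_right_mono) (fact, simp)
    finally show ?thesis unfolding e3 .
  qed
qed



lemma adelta_le:
  assumes "K \<ge> 0" "L \<ge> 0"
  shows "\<bar>Adelta K L p q\<bar> \<le> root 3 (p^2 * \<bar>q\<bar>)"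
    and "\<bar>Adelta K L p q\<bar> \<le> K * \<bar>p\<bar>"
    and "\<bar>Adelta K L p q\<bar> \<le> L * \<bar>q\<bar>"
proof -
  have a: "\<bar>Aop p q\<bar> = root 3 (p^2 * \<bar>q\<bar>)"
    unfolding Aop_def by (simp add: real_root_abs[symmetric] abs_mult)
  have nn: "min \<bar>Aop p q\<bar> (min (K * \<bar>p\<bar>) (L * \<bar>q\<bar>)) \<ge> 0" using assms by simp
  have s: "\<bar>sgn q\<bar> \<le> 1" by (simp add: abs_sgn_eq)
  have "\<bar>Adelta K L p q\<bar> \<le> min \<bar>Aop p q\<bar> (min (K * \<bar>p\<bar>) (L * \<bar>q\<bar>))"
    unfolding Adelta_def abs_mult abs_of_nonneg[OF nn] using nn s
    by (rule mult_left_le_one_le[OF _ abs_ge_zero])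
  then show "\<bar>Adelta K L p q\<bar> \<le> root 3 (p^2 * \<bar>q\<bar>)"
    and "\<bar>Adelta K L p q\<bar> \<le> K * \<bar>p\<bar>"
    and "\<bar>Adelta K L p q\<bar> \<le> L * \<bar>q\<bar>" using a by linarith+
qed

definition SV :: "real \<Rightarrow> real \<Rightarrow> real \<Rightarrow> real \<Rightarrow> real \<Rightarrow> real" where
  "SV K L mp mm b = - (Adelta K L mp (ppart (-b)) + Adelta K L (-mm) (npart (-b)))"

lemma Fscheme_SV:
  "Fscheme K L h u y = SV K L (ux_abs_plus u h y) (- ux_abs_minus_neg u h y) (uxx u h y)"
proof -
  have "ppart (ux_abs_plus u h y) = ux_abs_plus u h y"
    unfolding ppart_def ux_abs_plus_def by simp
  moreover have "npart (ux_abs_minus_neg u h y) = ux_abs_minus_neg u h y"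
    unfolding npart_def ux_abs_minus_neg_def by simp
  ultimately show ?thesis
    unfolding Fscheme_def SV_def Adelta_plus_def Adelta_minus_def by simp
qed

lemma ux_nonneg: "ux_abs_plus u h y \<ge> 0" "- ux_abs_minus_neg u h y \<ge> 0"
  unfolding ux_abs_plus_def ux_abs_minus_neg_def by auto

lemma SV_bounds:
  assumes "K \<ge> 0" "L \<ge> 0"
  shows "\<bar>SV K L mp mm b\<bar> \<le> root 3 (mp^2 * \<bar>b\<bar>) + root 3 (mm^2 * \<bar>b\<bar>)"
    and "\<bar>SV K L mp mm b\<bar> \<le> K * \<bar>mp\<bar> + K * \<bar>mm\<bar>"
    and "\<bar>SV K L mp mm b\<bar> \<le> 2 * L * \<bar>b\<bar>"
proof -
  have p1: "\<bar>ppart (-b)\<bar> \<le> \<bar>b\<bar>" "\<bar>npart (-b)\<bar> \<le> \<bar>b\<bar>"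
    unfolding ppart_def npart_def by auto
  have t: "\<bar>SV K L mp mm b\<bar> \<le> \<bar>Adelta K L mp (ppart (-b))\<bar> + \<bar>Adelta K L (-mm) (npart (-b))\<bar>"
    unfolding SV_def by (simp add: abs_triangle_ineq)
  have r1: "root 3 (mp^2 * \<bar>ppart (-b)\<bar>) \<le> root 3 (mp^2 * \<bar>b\<bar>)"
    using p1 by (simp add: mult_left_mono)
  have r2: "root 3 ((-mm)^2 * \<bar>npart (-b)\<bar>) \<le> root 3 (mm^2 * \<bar>b\<bar>)"
    using p1 by (simp add: mult_left_mono)
  show "\<bar>SV K L mp mm b\<bar> \<le> root 3 (mp^2 * \<bar>b\<bar>) + root 3 (mm^2 * \<bar>b\<bar>)"
    using t r1 r2 adelta_le(1)[OF assms, of mp "ppart (-b)"] adelta_le(1)[OF assms, of "-mm" "npart (-b)"]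
    by linarith
  show "\<bar>SV K L mp mm b\<bar> \<le> K * \<bar>mp\<bar> + K * \<bar>mm\<bar>"
    using t adelta_le(2)[OF assms, of mp "ppart (-b)"] adelta_le(2)[OF assms, of "-mm" "npart (-b)"]
    by simp
  have "L * \<bar>ppart (-b)\<bar> \<le> L * \<bar>b\<bar>" "L * \<bar>npart (-b)\<bar> \<le> L * \<bar>b\<bar>"
    using p1 assms by (simp_all add: mult_left_mono)
  then show "\<bar>SV K L mp mm b\<bar> \<le> 2 * L * \<bar>b\<bar>"
    using t adelta_le(3)[OF assms, of mp "ppart (-b)"] adelta_le(3)[OF assms, of "-mm" "npart (-b)"]
    by linarith
qed

lemma SV_exact_neg:
  assumes "b < 0" "mp \<ge> 0" "root 3 (mp^2 * (-b)) \<le> K * mp" "root 3 (mp^2 * (-b)) \<le> L * (-b)"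
  shows "SV K L mp mm b = root 3 (mp^2 * b)"
proof -
  have "ppart (-b) = -b" "npart (-b) = 0" using assms(1) unfolding ppart_def npart_def by auto
  moreover have "Adelta K L (-mm) 0 = 0" unfolding Adelta_def by simp
  moreover have "Adelta K L mp (-b) = root 3 (mp^2 * (-b))"
  proof -
    have "mp^2 * (-b) \<ge> 0" using mult_nonneg_nonpos[of "mp^2" b] assms(1) by simp
    then have "\<bar>Aop mp (-b)\<bar> = root 3 (mp^2 * (-b))"
      unfolding Aop_def by (simp only: abs_of_nonneg real_root_ge_zero)
    then show ?thesis unfolding Adelta_def using assms by simp
  qed
  ultimately show ?thesis unfolding SV_def by (simp add: real_root_minus)
qed

lemma SV_exact_pos:
  assumes "b > 0" "mm \<ge> 0" "root 3 (mm^2 * b) \<le> K * mm" "root 3 (mm^2 * b) \<le> L * b"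
  shows "SV K L mp mm b = root 3 (mm^2 * b)"
proof -
  have "ppart (-b) = 0" "npart (-b) = -b" using assms(1) unfolding ppart_def npart_def by auto
  moreover have "Adelta K L mp 0 = 0" unfolding Adelta_def by simp
  moreover have "Adelta K L (-mm) (-b) = - root 3 (mm^2 * b)"
  proof -
    have "\<bar>Aop (-mm) (-b)\<bar> = root 3 (mm^2 * b)"
      unfolding Aop_def using assms(1) by (simp add: abs_mult real_root_minus)
    then show ?thesis unfolding Adelta_def using assms by simp
  qed
  ultimately show ?thesis unfolding SV_def by simp
qed

lemma root3_lip:
  assumes "v \<noteq> 0"
  shows "\<bar>root 3 u - root 3 v\<bar> \<le> 4/3 * \<bar>u - v\<bar> / (root 3 v)^2"
proof -
  define r where "r = root 3 u"
  define s where "s = root 3 v"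
  have u: "u = r^3" and v: "v = s^3" unfolding r_def s_def by (simp_all add: odd_real_root_pow)
  have s0: "s \<noteq> 0" using assms v by auto
  have q: "r^2 + r * s + s^2 \<ge> 3/4 * (s^2)"
    using sum_squares_ge_zero[of "r + s/2" 0] by (simp add: power2_eq_square algebra_simps)
  have "u - v = (r - s) * (r^2 + r * s + s^2)" unfolding u v by (simp add: power2_eq_square power3_eq_cube algebra_simps)
  then have "\<bar>u - v\<bar> = \<bar>r - s\<bar> * (r^2 + r * s + s^2)"
    using q s0 by (simp add: abs_mult order_trans[OF _ q])
  moreover have "\<bar>r - s\<bar> * (3/4 * (s^2)) \<le> \<bar>r - s\<bar> * (r^2 + r * s + s^2)"
    by (rule mult_left_mono[OF q]) simp
  ultimately have "\<bar>r - s\<bar> * (3/4 * (s^2)) \<le> \<bar>u - v\<bar>" by linarith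
  then have "\<bar>r - s\<bar> * s^2 \<le> 4/3 * \<bar>u - v\<bar>" by (simp add: algebra_simps)
  then show ?thesis unfolding r_def[symmetric] s_def[symmetric] using s0 by (simp add: field_simps)
qed



lemma smooth_DERIV:
  assumes "smooth_on f V" "t \<in> V"
  shows "DERIV ((deriv^^k) f) t :> (deriv^^Suc k) f t"
proof -
  have "((deriv^^k) f) differentiable (at t)" using assms unfolding smooth_on_def by blast
  then show ?thesis using DERIV_deriv_iff_real_differentiable by simp
qed

lemma smooth_isCont:
  assumes "smooth_on f V" "t \<in> V"
  shows "isCont ((deriv^^k) f) t"
  using assms unfolding smooth_on_def by (blast intro: differentiable_imp_continuous_within)

lemma cont_bound:
  fixes g :: "real \<Rightarrow> real"
  assumes "isCont g z"
  shows "\<exists>d>0. \<forall>t. \<bar>t - z\<bar> < d \<longrightarrow> \<bar>g t\<bar> \<le> \<bar>g z\<bar> + 1"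
proof -
  from assms have "g \<midarrow>z\<rightarrow> g z" by (simp add: isCont_def)
  then obtain s where s: "s > 0" "\<forall>x. x \<noteq> z \<and> norm (x - z) < s \<longrightarrow> norm (g x - g z) < 1"
    unfolding LIM_eq by (meson zero_less_one)
  have "\<bar>g t\<bar> \<le> \<bar>g z\<bar> + 1" if "\<bar>t - z\<bar> < s" for t
    using s(2)[rule_format, of t] that by (cases "t = z") auto
  then show ?thesis using s(1) by blast
qed

lemma local_est:
  fixes f :: "real \<Rightarrow> real"
  assumes sm: "smooth_on f V" and V: "open V" and z: "z \<in> V"
  shows "\<exists>d>0. \<exists>M. \<forall>y h. 0 < h \<and> \<bar>y - z\<bar> + h < d \<longrightarrow>
      \<bar>(f y - f (y+h))/h + deriv f y\<bar> \<le> M*h \<and> \<bar>(f y - f (y-h))/h - deriv f y\<bar> \<le> M*h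
      \<and> \<bar>uxx f h y - (deriv^^2) f y\<bar> \<le> M*h^2"
proof -
  obtain e where e: "e > 0" "ball z e \<subseteq> V" using V z open_contains_ball by blast
  obtain d2 where d2: "d2 > 0" "\<forall>t. \<bar>t - z\<bar> < d2 \<longrightarrow> \<bar>(deriv^^2) f t\<bar> \<le> \<bar>(deriv^^2) f z\<bar> + 1"
    using cont_bound[OF smooth_isCont[OF sm z]] by blast
  obtain d4 where d4: "d4 > 0" "\<forall>t. \<bar>t - z\<bar> < d4 \<longrightarrow> \<bar>(deriv^^4) f t\<bar> \<le> \<bar>(deriv^^4) f z\<bar> + 1"
    using cont_bound[OF smooth_isCont[OF sm z]] by blast
  define d where "d = min e (min d2 d4)"
  define M where "M = \<bar>(deriv^^2) f z\<bar> + 1 + \<bar>(deriv^^4) f z\<bar>"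
  have dpos: "d > 0" unfolding d_def using e d2 d4 by simp
  have "\<bar>(f y - f (y+h))/h + deriv f y\<bar> \<le> M*h \<and> \<bar>(f y - f (y-h))/h - deriv f y\<bar> \<le> M*h
      \<and> \<bar>uxx f h y - (deriv^^2) f y\<bar> \<le> M*h^2" if yh: "0 < h" "\<bar>y - z\<bar> + h < d" for y h
  proof -
    have inV: "t \<in> V" if "y-h \<le> t \<and> t \<le> y+h" for t
    proof -
      have "dist z t < e" using that yh unfolding d_def dist_real_def by auto
      then show ?thesis using e(2) by auto
    qed
    have D: "\<forall>k t. y-h \<le> t \<and> t \<le> y+h \<longrightarrow> DERIV ((deriv^^k) f) t :> (deriv^^Suc k) f t"
      using smooth_DERIV[OF sm] inV by blast
    have B: "\<forall>t. y-h \<le> t \<and> t \<le> y+h \<longrightarrow> \<bar>(deriv^^2) f t\<bar> \<le> M \<and> \<bar>(deriv^^4) f t\<bar> \<le> M"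
    proof (intro allI impI)
      fix t assume t: "y-h \<le> t \<and> t \<le> y+h"
      then have "\<bar>t - z\<bar> < d2" "\<bar>t - z\<bar> < d4" using yh unfolding d_def by auto
      then show "\<bar>(deriv^^2) f t\<bar> \<le> M \<and> \<bar>(deriv^^4) f t\<bar> \<le> M"
        using d2(2) d4(2) unfolding M_def by fastforce
    qed
    show ?thesis using taylor_est[OF yh(1) D B] by blast
  qed
  then show ?thesis using dpos by blast
qed



lemma exact_cond:
  fixes mp nb m0 n0 K L R :: real
  assumes "mp \<ge> m0/2" "m0 > 0" "mp \<le> m0+1" "nb \<ge> n0/2" "n0>0" "nb \<le> n0+1"
    "K \<ge> 2*R/m0" "L \<ge> 2*R/n0" "R = root 3 ((m0+1)^2*(n0+1))"
  shows "root 3 (mp^2*nb) \<le> K*mp" "root 3 (mp^2*nb) \<le> L*nb"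
proof -
  have mp0: "mp \<ge> 0" and nb0: "nb \<ge> 0" using assms by auto
  have "mp^2 \<le> (m0+1)^2" using assms mp0 by (intro power_mono) auto
  then have "mp^2*nb \<le> (m0+1)^2*(n0+1)" using assms nb0 by (intro mult_mono) auto
  then have r: "root 3 (mp^2*nb) \<le> R" using assms(9) by simp
  have R0: "R \<ge> 0" using assms by simp
  have "2*R/m0 \<ge> 0" "2*R/n0 \<ge> 0" using R0 assms(2,5) by simp_all
  then have K0: "K \<ge> 0" and L0: "L \<ge> 0" using assms(7,8) by linarith+
  have "R = (2*R/m0) * (m0/2)" using assms by simp
  also have "\<dots> \<le> K * mp" using assms R0 K0 L0 by (intro mult_mono) auto
  finally show "root 3 (mp^2*nb) \<le> K*mp" using r by linarith
  have "R = (2*R/n0) * (n0/2)" using assms by simp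
  also have "\<dots> \<le> L * nb" using assms R0 K0 L0 by (intro mult_mono) auto
  finally show "root 3 (mp^2*nb) \<le> L*nb" using r by linarith
qed

lemma consistency:
  fixes K L \<psi> :: "real \<Rightarrow> real"
  assumes Kp: "\<forall>h>0. K h > 0" and Lp: "\<forall>h>0. L h > 0"
    and Kt: "filterlim K at_top (at_right 0)" and Lt: "filterlim L at_top (at_right 0)"
    and sm: "smooth_on \<psi> V" and V: "open V" and z: "z \<in> V"
  shows "((\<lambda>(h, y). Fscheme (K h) (L h) h \<psi> y) \<longlongrightarrow> F1D \<psi> z) (at_right 0 \<times>\<^sub>F nhds z)"
proof -
  define F where "F = at_right (0::real) \<times>\<^sub>F nhds z"
  define p where "p = deriv \<psi> z"
  define q where "q = (deriv^^2) \<psi> z"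
  define d1 where "d1 = (\<lambda>x::real\<times>real. (\<psi> (snd x) - \<psi> (snd x + fst x)) / fst x)"
  define d2 where "d2 = (\<lambda>x::real\<times>real. (\<psi> (snd x) - \<psi> (snd x - fst x)) / fst x)"
  define b where "b = (\<lambda>x::real\<times>real. uxx \<psi> (fst x) (snd x))"
  define mp where "mp = (\<lambda>x. max (max (d1 x) (d2 x)) 0)"
  define mm where "mm = (\<lambda>x. - min (min (d1 x) (d2 x)) 0)"
  have target: "F1D \<psi> z = root 3 (p^2 * q)"
    unfolding F1D_def p_def q_def by (simp add: numeral_2_eq_2)
  have FS: "(\<lambda>(h, y). Fscheme (K h) (L h) h \<psi> y) = (\<lambda>x. SV (K (fst x)) (L (fst x)) (mp x) (mm x) (b x))"
    unfolding Fscheme_SV mp_def mm_def d1_def d2_def b_def ux_abs_plus_def ux_abs_minus_neg_def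
    by (auto simp: case_prod_unfold)
  obtain d M where dM: "d > 0" "\<forall>y h. 0 < h \<and> \<bar>y - z\<bar> + h < d \<longrightarrow>
      \<bar>(\<psi> y - \<psi> (y+h))/h + deriv \<psi> y\<bar> \<le> M*h \<and> \<bar>(\<psi> y - \<psi> (y-h))/h - deriv \<psi> y\<bar> \<le> M*h
      \<and> \<bar>uxx \<psi> h y - (deriv^^2) \<psi> y\<bar> \<le> M*h^2"
    using local_est[OF sm V z] by blast
  have ev1: "eventually (\<lambda>h::real. 0 < h \<and> h < d/2) (at_right 0)"
    unfolding eventually_at_right_field using dM(1) by (intro exI[of _ "d/2"]) auto
  have ev2: "eventually (\<lambda>y. \<bar>y - z\<bar> < d/2) (nhds z)"
    unfolding eventually_nhds_metric using dM(1) by (intro exI[of _ "d/2"]) (auto simp: dist_real_def)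
  have E: "eventually (\<lambda>x. 0 < fst x \<and> \<bar>snd x - z\<bar> + fst x < d) F"
    unfolding F_def by (rule eventually_mono[OF eventually_prodI[OF ev1 ev2]]) auto
  have fst0: "((\<lambda>x. fst x) \<longlongrightarrow> 0) F"
    unfolding F_def by (rule filterlim_compose[OF tendsto_ident_at filterlim_fst])
  have sndz: "((\<lambda>x. snd x) \<longlongrightarrow> z) F"
    unfolding F_def by (rule filterlim_snd)
  have c1: "((\<lambda>x. deriv \<psi> (snd x)) \<longlongrightarrow> p) F"
    unfolding p_def using isCont_tendsto_compose[OF smooth_isCont[OF sm z, of 1] sndz] by simp
  have c2: "((\<lambda>x. (deriv^^2) \<psi> (snd x)) \<longlongrightarrow> q) F"
    unfolding q_def using isCont_tendsto_compose[OF smooth_isCont[OF sm z, of 2] sndz] by simp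
  have Mh: "((\<lambda>x. M * fst x) \<longlongrightarrow> 0) F" using tendsto_mult[OF tendsto_const fst0, of M] by simp
  have Mh2: "((\<lambda>x. M * (fst x)^2) \<longlongrightarrow> 0) F"
    using tendsto_mult[OF tendsto_const tendsto_power[OF fst0, of 2], of M] by simp
  have "((\<lambda>x. d1 x + deriv \<psi> (snd x)) \<longlongrightarrow> 0) F"
    by (rule Lim_null_comparison[OF eventually_mono[OF E] Mh]) (use dM(2) in \<open>auto simp: d1_def\<close>)
  from tendsto_diff[OF this c1] have L1: "(d1 \<longlongrightarrow> -p) F" by simp
  have "((\<lambda>x. d2 x - deriv \<psi> (snd x)) \<longlongrightarrow> 0) F"
    by (rule Lim_null_comparison[OF eventually_mono[OF E] Mh]) (use dM(2) in \<open>auto simp: d2_def\<close>)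
  from tendsto_add[OF this c1] have L2: "(d2 \<longlongrightarrow> p) F" by simp
  have "((\<lambda>x. b x - (deriv^^2) \<psi> (snd x)) \<longlongrightarrow> 0) F"
    by (rule Lim_null_comparison[OF eventually_mono[OF E] Mh2]) (use dM(2) in \<open>auto simp: b_def\<close>)
  from tendsto_add[OF this c2] have Lb: "(b \<longlongrightarrow> q) F" by simp
  have Lmp: "(mp \<longlongrightarrow> \<bar>p\<bar>) F"
  proof -
    have "(mp \<longlongrightarrow> max (max (-p) p) 0) F" unfolding mp_def by (intro tendsto_max L1 L2 tendsto_const)
    moreover have "max (max (-p) p) 0 = \<bar>p\<bar>" by auto
    ultimately show ?thesis by simp
  qed
  have Lmm: "(mm \<longlongrightarrow> \<bar>p\<bar>) F"
  proof -
    have "(mm \<longlongrightarrow> - min (min (-p) p) 0) F" unfolding mm_def by (intro tendsto_minus tendsto_min L1 L2 tendsto_const)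
    moreover have "- min (min (-p) p) 0 = \<bar>p\<bar>" by auto
    ultimately show ?thesis by simp
  qed
  have KLnn: "eventually (\<lambda>x. K (fst x) \<ge> 0 \<and> L (fst x) \<ge> 0) F"
    using E by eventually_elim (use Kp Lp in \<open>auto simp: less_imp_le\<close>)
  have KF: "filterlim (\<lambda>x. K (fst x)) at_top F" unfolding F_def by (rule filterlim_compose[OF Kt filterlim_fst])
  have LF: "filterlim (\<lambda>x. L (fst x)) at_top F" unfolding F_def by (rule filterlim_compose[OF Lt filterlim_fst])
  have main: "((\<lambda>x. SV (K (fst x)) (L (fst x)) (mp x) (mm x) (b x)) \<longlongrightarrow> root 3 (p^2 * q)) F"
  proof (cases "p = 0 \<or> q = 0")
    case True
    then have t0: "root 3 (p^2 * q) = 0" by auto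
    have g: "((\<lambda>x. root 3 ((mp x)^2 * \<bar>b x\<bar>) + root 3 ((mm x)^2 * \<bar>b x\<bar>)) \<longlongrightarrow>
        root 3 (\<bar>p\<bar>^2 * \<bar>q\<bar>) + root 3 (\<bar>p\<bar>^2 * \<bar>q\<bar>)) F"
      by (intro tendsto_intros Lmp Lmm Lb)
    have "root 3 (\<bar>p\<bar>^2 * \<bar>q\<bar>) + root 3 (\<bar>p\<bar>^2 * \<bar>q\<bar>) = 0" using True by auto
    then have g0: "((\<lambda>x. root 3 ((mp x)^2 * \<bar>b x\<bar>) + root 3 ((mm x)^2 * \<bar>b x\<bar>)) \<longlongrightarrow> 0) F"
      using g True by (cases "p = 0") auto
    have "((\<lambda>x. SV (K (fst x)) (L (fst x)) (mp x) (mm x) (b x)) \<longlongrightarrow> 0) F"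
      by (rule Lim_null_comparison[OF eventually_mono[OF KLnn] g0]) (use SV_bounds(1) in auto)
    then show ?thesis using True by (cases "p = 0") auto
  next
    case False
    then have p0: "\<bar>p\<bar> > 0" and q0: "q \<noteq> 0" by auto
    define R where "R = root 3 ((\<bar>p\<bar>+1)^2*(\<bar>q\<bar>+1))"
    have e_mp: "eventually (\<lambda>x. mp x \<ge> \<bar>p\<bar>/2 \<and> mp x \<le> \<bar>p\<bar>+1) F"
      using order_tendstoD(1)[OF Lmp, of "\<bar>p\<bar>/2"] order_tendstoD(2)[OF Lmp, of "\<bar>p\<bar>+1"] p0
      by (auto elim: eventually_elim2)
    have e_mm: "eventually (\<lambda>x. mm x \<ge> \<bar>p\<bar>/2 \<and> mm x \<le> \<bar>p\<bar>+1) F"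
      using order_tendstoD(1)[OF Lmm, of "\<bar>p\<bar>/2"] order_tendstoD(2)[OF Lmm, of "\<bar>p\<bar>+1"] p0
      by (auto elim: eventually_elim2)
    have e_K: "eventually (\<lambda>x. K (fst x) \<ge> 2*R/\<bar>p\<bar>) F" using KF unfolding filterlim_at_top by blast
    have e_L: "eventually (\<lambda>x. L (fst x) \<ge> 2*R/\<bar>q\<bar>) F" using LF unfolding filterlim_at_top by blast
    show ?thesis
    proof (cases "q < 0")
      case True
      have e_b: "eventually (\<lambda>x. -b x \<ge> \<bar>q\<bar>/2 \<and> -b x \<le> \<bar>q\<bar>+1) F"
        using order_tendstoD(2)[OF Lb, of "q/2"] order_tendstoD(1)[OF Lb, of "q - 1"] True
        by (auto elim: eventually_elim2)
      have ev: "eventually (\<lambda>x. SV (K (fst x)) (L (fst x)) (mp x) (mm x) (b x) = root 3 ((mp x)^2 * b x)) F"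
        using e_mp e_b e_K e_L
      proof eventually_elim
        case (elim x)
        have c: "root 3 ((mp x)^2*(-b x)) \<le> K (fst x)*mp x" "root 3 ((mp x)^2*(-b x)) \<le> L (fst x)*(-b x)"
          using exact_cond[of "\<bar>p\<bar>" "mp x" "\<bar>q\<bar>" "-b x" R "K (fst x)" "L (fst x)"] elim p0 q0 R_def by auto
        have "b x < 0" "mp x \<ge> 0" using elim q0 p0 by auto
        then show ?case using SV_exact_neg c by blast
      qed
      have "((\<lambda>x. root 3 ((mp x)^2 * b x)) \<longlongrightarrow> root 3 (p^2 * q)) F"
        using tendsto_real_root[OF tendsto_mult[OF tendsto_power[OF Lmp, of 2] Lb], of 3] by simp
      then show ?thesis by (rule Lim_transform_eventually) (use ev in \<open>auto elim: eventually_mono\<close>)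
    next
      case False
      then have qp: "q > 0" using q0 by simp
      have e_b: "eventually (\<lambda>x. b x \<ge> \<bar>q\<bar>/2 \<and> b x \<le> \<bar>q\<bar>+1) F"
        using order_tendstoD(1)[OF Lb, of "q/2"] order_tendstoD(2)[OF Lb, of "q + 1"] qp
        by (auto elim: eventually_elim2)
      have ev: "eventually (\<lambda>x. SV (K (fst x)) (L (fst x)) (mp x) (mm x) (b x) = root 3 ((mm x)^2 * b x)) F"
        using e_mm e_b e_K e_L
      proof eventually_elim
        case (elim x)
        have c: "root 3 ((mm x)^2*(b x)) \<le> K (fst x)*mm x" "root 3 ((mm x)^2*(b x)) \<le> L (fst x)*(b x)"
          using exact_cond[of "\<bar>p\<bar>" "mm x" "\<bar>q\<bar>" "b x" R "K (fst x)" "L (fst x)"] elim p0 q0 R_def by auto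
        have "b x > 0" "mm x \<ge> 0" using elim qp p0 by auto
        then show ?case using SV_exact_pos c by blast
      qed
      have "((\<lambda>x. root 3 ((mm x)^2 * b x)) \<longlongrightarrow> root 3 (p^2 * q)) F"
        using tendsto_real_root[OF tendsto_mult[OF tendsto_power[OF Lmm, of 2] Lb], of 3] by simp
      then show ?thesis by (rule Lim_transform_eventually) (use ev in \<open>auto elim: eventually_mono\<close>)
    qed
  qed
  show ?thesis unfolding FS target using main unfolding F_def .
qed



lemma maxmin_lip:
  fixes a b a' b' e :: real
  assumes "\<bar>a - a'\<bar> \<le> e" "\<bar>b - b'\<bar> \<le> e"
  shows "\<bar>max (max a b) 0 - max (max a' b') 0\<bar> \<le> e"
    and "\<bar>(- min (min a b) 0) - (- min (min a' b') 0)\<bar> \<le> e"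
  using assms by (auto simp: max_def min_def abs_le_iff)

lemma prod_err:
  fixes m P b Q e e' :: real
  assumes "\<bar>m - P\<bar> \<le> e" "P \<ge> 0" "m \<ge> 0" "m \<le> P+1" "\<bar>b - Q\<bar> \<le> e'" "\<bar>b\<bar> \<le> \<bar>Q\<bar>+1"
  shows "\<bar>m^2*b - P^2*Q\<bar> \<le> e*(2*P+1)*(\<bar>Q\<bar>+1) + P^2*e'"
proof -
  have eq: "m^2*b - P^2*Q = (m - P)*(m + P)*b + P^2*(b - Q)" by (simp add: algebra_simps power2_eq_square)
  have "\<bar>(m - P)*(m + P)*b\<bar> = \<bar>m - P\<bar>*(m+P)*\<bar>b\<bar>" using assms by (simp add: abs_mult)
  also have "\<dots> \<le> e*(2*P+1)*(\<bar>Q\<bar>+1)"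
    using assms by (intro mult_mono) auto
  finally have 1: "\<bar>(m - P)*(m + P)*b\<bar> \<le> e*(2*P+1)*(\<bar>Q\<bar>+1)" .
  have 2: "\<bar>P^2*(b - Q)\<bar> \<le> P^2*e'" using assms by (simp add: abs_mult mult_left_mono)
  show ?thesis unfolding eq using 1 2 abs_triangle_ineq[of "(m - P)*(m + P)*b" "P^2*(b - Q)"] by linarith
qed

lemma accuracy:
  fixes K L \<phi> :: "real \<Rightarrow> real" and \<alpha> \<beta> cK cL :: real
  assumes Kp: "\<forall>h>0. K h > 0" and Lp: "\<forall>h>0. L h > 0"
    and Kt: "filterlim K at_top (at_right 0)" and Lt: "filterlim L at_top (at_right 0)"
    and Kb: "eventually (\<lambda>h. K h \<le> cK * h powr (-\<alpha>)) (at_right 0)"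
    and Lb: "eventually (\<lambda>h. L h \<le> cL * h powr (-\<beta>)) (at_right 0)"
    and \<alpha>: "\<alpha> < 1" and \<alpha>0: "0 < \<alpha>"
    and sm: "smooth_on \<phi> V" and V: "open V" and x: "x \<in> V"
  shows "(\<lambda>h. Fscheme (K h) (L h) h \<phi> x - F1D \<phi> x)
        \<in> O[at_right 0](\<lambda>h. h powr (1 - \<alpha>) + h powr (2 - \<beta>) + h powr (min (2 * \<alpha>) (\<beta> / 2)))"
proof -
  define G where "G = (\<lambda>h::real. h powr (1 - \<alpha>) + h powr (2 - \<beta>) + h powr (min (2 * \<alpha>) (\<beta> / 2)))"
  define p where "p = deriv \<phi> x"
  define q where "q = (deriv^^2) \<phi> x"
  define mp where "mp = (\<lambda>h. ux_abs_plus \<phi> h x)"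
  define mm where "mm = (\<lambda>h. - ux_abs_minus_neg \<phi> h x)"
  define b where "b = (\<lambda>h. uxx \<phi> h x)"
  have target: "F1D \<phi> x = root 3 (p^2 * q)"
    unfolding F1D_def p_def q_def by (simp add: numeral_2_eq_2)
  have FS: "Fscheme (K h) (L h) h \<phi> x = SV (K h) (L h) (mp h) (mm h) (b h)" for h
    unfolding Fscheme_SV mp_def mm_def b_def ..
  have mp0: "mp h \<ge> 0" "mm h \<ge> 0" for h unfolding mp_def mm_def using ux_nonneg by auto
  obtain d M where dM: "d > 0" "\<forall>y h. 0 < h \<and> \<bar>y - x\<bar> + h < d \<longrightarrow>
      \<bar>(\<phi> y - \<phi> (y+h))/h + deriv \<phi> y\<bar> \<le> M*h \<and> \<bar>(\<phi> y - \<phi> (y-h))/h - deriv \<phi> y\<bar> \<le> M*h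
      \<and> \<bar>uxx \<phi> h y - (deriv^^2) \<phi> y\<bar> \<le> M*h^2"
    using local_est[OF sm V x] by blast
  define d' where "d' = min d 1"
  have d'0: "d' > 0" unfolding d'_def using dM(1) by simp
  have M0: "M \<ge> 0"
  proof -
    have "\<bar>(\<phi> x - \<phi> (x+d'/2))/(d'/2) + deriv \<phi> x\<bar> \<le> M*(d'/2)"
      using dM(2)[rule_format, of "d'/2" x] d'0 unfolding d'_def by auto
    then have "0 \<le> M*(d'/2)" by linarith
    then show ?thesis using d'0 by (simp add: zero_le_mult_iff)
  qed
  have est: "\<bar>mp h - \<bar>p\<bar>\<bar> \<le> M*h \<and> \<bar>mm h - \<bar>p\<bar>\<bar> \<le> M*h \<and> \<bar>b h - q\<bar> \<le> M*h^2"
    if h: "0 < h" "h < d'" for h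
  proof -
    have e: "\<bar>(\<phi> x - \<phi> (x+h))/h - (-p)\<bar> \<le> M*h" "\<bar>(\<phi> x - \<phi> (x-h))/h - p\<bar> \<le> M*h"
      "\<bar>b h - q\<bar> \<le> M*h^2"
      using dM(2)[rule_format, of h x] h unfolding d'_def p_def q_def b_def by auto
    have eq1: "max (max (-p) p) 0 = \<bar>p\<bar>" and eq2: "- min (min (-p) p) 0 = \<bar>p\<bar>" by auto
    have A: "\<bar>mp h - max (max (-p) p) 0\<bar> \<le> M*h" unfolding mp_def ux_abs_plus_def
      by (rule maxmin_lip(1)[OF e(1,2)])
    have B: "\<bar>mm h - (- min (min (-p) p) 0)\<bar> \<le> M*h" unfolding mm_def ux_abs_minus_neg_def
      by (rule maxmin_lip(2)[OF e(1,2)])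
    show ?thesis using A B e(3) unfolding eq1 eq2 by blast
  qed
  have E: "eventually (\<lambda>h. 0 < h \<and> h < d') (at_right 0)"
    unfolding eventually_at_right_field using d'0 by (intro exI[of _ d']) auto
  have Gge: "G h \<ge> h powr (1 - \<alpha>)" "G h \<ge> h powr (2 - \<beta>)" "\<bar>G h\<bar> = G h" for h
    unfolding G_def by auto
  have "\<exists>c. eventually (\<lambda>h. \<bar>Fscheme (K h) (L h) h \<phi> x - F1D \<phi> x\<bar> \<le> c * \<bar>G h\<bar>) (at_right 0)"
  proof (cases "p = 0")
    case True
    have "eventually (\<lambda>h. \<bar>Fscheme (K h) (L h) h \<phi> x - F1D \<phi> x\<bar> \<le> (2*cK*M) * \<bar>G h\<bar>) (at_right 0)"
      using E Kb
    proof eventually_elim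
      case (elim h)
      have K0: "K h \<ge> 0" "L h \<ge> 0" using Kp Lp elim by (auto simp: less_imp_le)
      have e: "mp h \<le> M*h" "mm h \<le> M*h" using est[of h] elim True by auto
      have "\<bar>SV (K h) (L h) (mp h) (mm h) (b h)\<bar> \<le> K h * mp h + K h * mm h"
        using SV_bounds(2)[OF K0, of "mp h" "mm h" "b h"] mp0 by simp
      also have "\<dots> \<le> K h * (M*h) + K h * (M*h)"
        using e K0 by (intro add_mono mult_left_mono) auto
      also have "\<dots> \<le> (cK * h powr (-\<alpha>)) * (M*h) + (cK * h powr (-\<alpha>)) * (M*h)"
        using elim M0 by (intro add_mono mult_right_mono) auto
      also have "\<dots> = 2*cK*M * h powr (1 - \<alpha>)"
      proof -
        have "h powr (1 - \<alpha>) = h powr 1 * h powr (-\<alpha>)" using powr_add[of h 1 "-\<alpha>"] by simp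
        then have "h powr (1 - \<alpha>) = h * h powr (-\<alpha>)" using elim by simp
        then show ?thesis by (simp add: algebra_simps)
      qed
      finally have 1: "\<bar>SV (K h) (L h) (mp h) (mm h) (b h)\<bar> \<le> 2*cK*M * h powr (1 - \<alpha>)" .
      have "cK \<ge> 0"
      proof (rule ccontr)
        assume "\<not> cK \<ge> 0"
        then have "cK * h powr (-\<alpha>) < 0" using elim by (simp add: mult_neg_pos)
        then show False using elim K0 by linarith
      qed
      then have "2*cK*M * h powr (1 - \<alpha>) \<le> 2*cK*M * G h"
        using Gge(1)[of h] M0 by (intro mult_left_mono) auto
      then show ?case using 1 FS[of h] target True Gge(3)[of h] by simp
    qed
    then show ?thesis by blast
  next
    case pF: False
    show ?thesis
    proof (cases "q = 0")
      case True
      have "eventually (\<lambda>h. \<bar>Fscheme (K h) (L h) h \<phi> x - F1D \<phi> x\<bar> \<le> (2*cL*M) * \<bar>G h\<bar>) (at_right 0)"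
        using E Lb
      proof eventually_elim
        case (elim h)
        have K0: "K h \<ge> 0" "L h \<ge> 0" using Kp Lp elim by (auto simp: less_imp_le)
        have e: "\<bar>b h\<bar> \<le> M*h^2" using est[of h] elim True by auto
        have "\<bar>SV (K h) (L h) (mp h) (mm h) (b h)\<bar> \<le> 2 * L h * \<bar>b h\<bar>"
          using SV_bounds(3)[OF K0] by simp
        also have "\<dots> \<le> 2 * L h * (M*h^2)"
          using e K0 by (intro mult_left_mono) auto
        also have "\<dots> \<le> 2 * (cL * h powr (-\<beta>)) * (M*h^2)"
          using elim M0 by (intro mult_right_mono) auto
        also have "\<dots> = 2*cL*M * h powr (2 - \<beta>)"
        proof -
          have "h powr (2 - \<beta>) = h powr 2 * h powr (-\<beta>)" using powr_add[of h 2 "-\<beta>"] by simp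
          then have "h powr (2 - \<beta>) = h^2 * h powr (-\<beta>)" using elim by (simp add: powr_numeral)
          then show ?thesis by (simp add: algebra_simps)
        qed
        finally have 1: "\<bar>SV (K h) (L h) (mp h) (mm h) (b h)\<bar> \<le> 2*cL*M * h powr (2 - \<beta>)" .
        have "cL \<ge> 0"
        proof (rule ccontr)
          assume "\<not> cL \<ge> 0"
          then have "cL * h powr (-\<beta>) < 0" using elim by (simp add: mult_neg_pos)
          then show False using elim K0 by linarith
        qed
        then have "2*cL*M * h powr (2 - \<beta>) \<le> 2*cL*M * G h"
          using Gge(2)[of h] M0 by (intro mult_left_mono) auto
        then show ?case using 1 FS[of h] target True Gge(3)[of h] by simp
      qed
      then show ?thesis by blast
    next
      case qF: False
      have p0: "\<bar>p\<bar> > 0" using pF by simp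
      have fst0: "((\<lambda>h::real. h) \<longlongrightarrow> 0) (at_right 0)" by (rule tendsto_ident_at)
      have Mh: "((\<lambda>h. M * h) \<longlongrightarrow> 0) (at_right (0::real))" using tendsto_mult[OF tendsto_const fst0, of M] by simp
      have Mh2: "((\<lambda>h. M * h^2) \<longlongrightarrow> 0) (at_right (0::real))"
        using tendsto_mult[OF tendsto_const tendsto_power[OF fst0, of 2], of M] by simp
      have "((\<lambda>h. mp h - \<bar>p\<bar>) \<longlongrightarrow> 0) (at_right 0)"
        by (rule Lim_null_comparison[OF eventually_mono[OF E] Mh]) (use est in auto)
      then have Lmp: "(mp \<longlongrightarrow> \<bar>p\<bar>) (at_right 0)" using tendsto_add_const_iff[of "-\<bar>p\<bar>"] by (simp add: LIM_zero_iff)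
      have "((\<lambda>h. mm h - \<bar>p\<bar>) \<longlongrightarrow> 0) (at_right 0)"
        by (rule Lim_null_comparison[OF eventually_mono[OF E] Mh]) (use est in auto)
      then have Lmm: "(mm \<longlongrightarrow> \<bar>p\<bar>) (at_right 0)" by (simp add: LIM_zero_iff)
      have "((\<lambda>h. b h - q) \<longlongrightarrow> 0) (at_right 0)"
        by (rule Lim_null_comparison[OF eventually_mono[OF E] Mh2]) (use est in auto)
      then have Lb': "(b \<longlongrightarrow> q) (at_right 0)" by (simp add: LIM_zero_iff)
      define R where "R = root 3 ((\<bar>p\<bar>+1)^2*(\<bar>q\<bar>+1))"
      have e_mp: "eventually (\<lambda>h. mp h \<ge> \<bar>p\<bar>/2 \<and> mp h \<le> \<bar>p\<bar>+1) (at_right 0)"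
        using order_tendstoD(1)[OF Lmp, of "\<bar>p\<bar>/2"] order_tendstoD(2)[OF Lmp, of "\<bar>p\<bar>+1"] p0
        by (auto elim: eventually_elim2)
      have e_mm: "eventually (\<lambda>h. mm h \<ge> \<bar>p\<bar>/2 \<and> mm h \<le> \<bar>p\<bar>+1) (at_right 0)"
        using order_tendstoD(1)[OF Lmm, of "\<bar>p\<bar>/2"] order_tendstoD(2)[OF Lmm, of "\<bar>p\<bar>+1"] p0
        by (auto elim: eventually_elim2)
      have e_b: "eventually (\<lambda>h. \<bar>b h\<bar> \<ge> \<bar>q\<bar>/2 \<and> \<bar>b h\<bar> \<le> \<bar>q\<bar>+1 \<and> sgn (b h) = sgn q) (at_right 0)"
      proof -
        have "((\<lambda>h. \<bar>b h - q\<bar>) \<longlongrightarrow> 0) (at_right 0)"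
          using tendsto_rabs[OF \<open>((\<lambda>h. b h - q) \<longlongrightarrow> 0) (at_right 0)\<close>] by simp
        from order_tendstoD(2)[OF this, of "min (\<bar>q\<bar>/2) 1"] qF
        have "eventually (\<lambda>h. \<bar>b h - q\<bar> < min (\<bar>q\<bar>/2) 1) (at_right 0)" by simp
        then show ?thesis by (rule eventually_mono) (auto simp: sgn_if abs_if split: if_splits)
      qed
      have e_K: "eventually (\<lambda>h. K h \<ge> 2*R/\<bar>p\<bar>) (at_right 0)" using Kt unfolding filterlim_at_top by blast
      have e_L: "eventually (\<lambda>h. L h \<ge> 2*R/\<bar>q\<bar>) (at_right 0)" using Lt unfolding filterlim_at_top by blast
      define r2 where "r2 = (root 3 (p^2*q))^2"
      have r2: "r2 > 0" unfolding r2_def using pF qF by simp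
      define C where "C = 4/3 * (M*(2*\<bar>p\<bar>+1)*(\<bar>q\<bar>+1) + p^2*M) / r2"
      have C0: "C \<ge> 0" unfolding C_def using M0 r2 by simp
      have "eventually (\<lambda>h. \<bar>Fscheme (K h) (L h) h \<phi> x - F1D \<phi> x\<bar> \<le> C * \<bar>G h\<bar>) (at_right 0)"
        using E e_mp e_mm e_b e_K e_L
      proof eventually_elim
        case (elim h)
        obtain m where m: "Fscheme (K h) (L h) h \<phi> x = root 3 (m^2 * b h)" "\<bar>m - \<bar>p\<bar>\<bar> \<le> M*h"
          "m \<ge> 0" "m \<le> \<bar>p\<bar>+1"
        proof (cases "q < 0")
          case True
          then have bn: "b h < 0" using elim by (auto simp: sgn_if split: if_splits)
          have ab: "\<bar>b h\<bar> = - b h" using bn by simp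
          have bb: "-b h \<ge> \<bar>q\<bar>/2" "-b h \<le> \<bar>q\<bar>+1" using elim unfolding ab by auto
          have q0: "\<bar>q\<bar> > 0" using qF by simp
          have ee: "mp h \<ge> \<bar>p\<bar>/2" "mp h \<le> \<bar>p\<bar>+1" "K h \<ge> 2*R/\<bar>p\<bar>" "L h \<ge> 2*R/\<bar>q\<bar>"
            using elim by auto
          have c: "root 3 ((mp h)^2*(-b h)) \<le> K h*mp h" "root 3 ((mp h)^2*(-b h)) \<le> L h*(-b h)"
            using exact_cond[OF ee(1) p0 ee(2) bb(1) q0 bb(2) ee(3) ee(4) R_def] by auto
          have est': "\<bar>mp h - \<bar>p\<bar>\<bar> \<le> M*h" using est[of h] elim by blast
          show ?thesis
          proof (rule that[of "mp h"])
            show "Fscheme (K h) (L h) h \<phi> x = root 3 ((mp h)\<^sup>2 * b h)"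
              using FS[of h] SV_exact_neg[OF bn mp0(1) c] by simp
          qed (use est' mp0 ee in auto)
        next
          case False
          then have bp: "b h > 0" using elim qF by (auto simp: sgn_if split: if_splits)
          have ab: "\<bar>b h\<bar> = b h" using bp by simp
          have bb: "b h \<ge> \<bar>q\<bar>/2" "b h \<le> \<bar>q\<bar>+1" using elim unfolding ab by auto
          have q0: "\<bar>q\<bar> > 0" using qF by simp
          have ee: "mm h \<ge> \<bar>p\<bar>/2" "mm h \<le> \<bar>p\<bar>+1" "K h \<ge> 2*R/\<bar>p\<bar>" "L h \<ge> 2*R/\<bar>q\<bar>"
            using elim by auto
          have c: "root 3 ((mm h)^2*(b h)) \<le> K h*mm h" "root 3 ((mm h)^2*(b h)) \<le> L h*(b h)"
            using exact_cond[OF ee(1) p0 ee(2) bb(1) q0 bb(2) ee(3) ee(4) R_def] by auto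
          have est': "\<bar>mm h - \<bar>p\<bar>\<bar> \<le> M*h" using est[of h] elim by blast
          show ?thesis
          proof (rule that[of "mm h"])
            show "Fscheme (K h) (L h) h \<phi> x = root 3 ((mm h)\<^sup>2 * b h)"
              using FS[of h] SV_exact_pos[OF bp mp0(2) c] by simp
          qed (use est' mp0 ee in auto)
        qed
        have bq: "\<bar>b h - q\<bar> \<le> M*h^2" using est[of h] elim by auto
        have pe: "\<bar>m^2 * b h - \<bar>p\<bar>^2 * q\<bar> \<le> (M*h)*(2*\<bar>p\<bar>+1)*(\<bar>q\<bar>+1) + \<bar>p\<bar>^2*(M*h^2)"
          by (rule prod_err) (use m bq elim in auto)
        have "h \<le> 1" using elim unfolding d'_def by auto
        then have "h*h \<le> h*1" using elim by (intro mult_left_mono) auto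
        then have "M*h^2 \<le> M*h" using M0 by (simp add: mult_left_mono power2_eq_square)
        then have pe2: "\<bar>m^2 * b h - p^2 * q\<bar> \<le> h * (M*(2*\<bar>p\<bar>+1)*(\<bar>q\<bar>+1) + p^2*M)"
          using pe mult_left_mono[of "M*h^2" "M*h" "p^2"] by (simp add: algebra_simps)
        have "\<bar>Fscheme (K h) (L h) h \<phi> x - F1D \<phi> x\<bar> \<le> 4/3 * \<bar>m^2 * b h - p^2 * q\<bar> / r2"
          unfolding m(1) target r2_def using root3_lip[of "p^2*q" "m^2 * b h"] pF qF by simp
        also have "\<dots> \<le> 4/3 * (h * (M*(2*\<bar>p\<bar>+1)*(\<bar>q\<bar>+1) + p^2*M)) / r2"
          using pe2 r2 by (intro divide_right_mono mult_left_mono) auto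
        also have "\<dots> = C * h" unfolding C_def by (simp add: field_simps)
        also have "\<dots> \<le> C * h powr (1 - \<alpha>)"
        proof -
          have "h powr 1 \<le> h powr (1 - \<alpha>)" using elim \<alpha> unfolding d'_def
            by (intro powr_mono') (use \<alpha>0 in auto)
          then show ?thesis using C0 elim by (intro mult_left_mono) auto
        qed
        also have "\<dots> \<le> C * \<bar>G h\<bar>" using Gge[of h] C0 by (intro mult_left_mono) auto
        finally show ?case .
      qed
      then show ?thesis by blast
    qed
  qed
  then obtain c where "eventually (\<lambda>h. \<bar>Fscheme (K h) (L h) h \<phi> x - F1D \<phi> x\<bar> \<le> c * \<bar>G h\<bar>) (at_right 0)" by blast
  then have "(\<lambda>h. Fscheme (K h) (L h) h \<phi> x - F1D \<phi> x) \<in> O[at_right 0](G)"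
    by (intro bigoI[of _ c]) simp
  then show ?thesis unfolding G_def .
qed



lemma powr_neg_at_top:
  fixes a :: real assumes "0 < a"
  shows "filterlim (\<lambda>h::real. h powr (-a)) at_top (at_right 0)"
proof -
  have "filterlim (\<lambda>h::real. inverse h powr a) at_top (at_right 0)"
    by (rule filterlim_compose[OF real_powr_at_top[OF assms] filterlim_inverse_at_top_right])
  then show ?thesis by (simp add: inverse_powr powr_minus)
qed

lemma theta_facts:
  fixes K :: "real \<Rightarrow> real" and a :: real
  assumes Kp: "\<forall>h>0. K h > 0" and a: "0 < a" and KO: "K \<in> \<Theta>[at_right 0](\<lambda>h. h powr (-a))"
  shows "filterlim K at_top (at_right 0)"
    and "\<exists>c. eventually (\<lambda>h. K h \<le> c * h powr (-a)) (at_right 0)"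
proof -
  from bigthetaD2[OF KO] obtain c where c: "c > 0"
    "eventually (\<lambda>h. norm (K h) \<ge> c * norm (h powr (-a))) (at_right 0)"
    by (elim landau_omega.bigE) auto
  have "eventually (\<lambda>h. c * h powr (-a) \<le> K h) (at_right 0)"
    using c(2) eventually_at_right_less[of 0]
    by eventually_elim (use Kp in auto)
  moreover have "filterlim (\<lambda>h. c * h powr (-a)) at_top (at_right 0)"
    by (rule filterlim_tendsto_pos_mult_at_top[OF tendsto_const c(1) powr_neg_at_top[OF a]])
  ultimately show "filterlim K at_top (at_right 0)" using filterlim_at_top_mono by blast
  from bigthetaD1[OF KO] obtain c' where c': "c' > 0"
    "eventually (\<lambda>h. norm (K h) \<le> c' * norm (h powr (-a))) (at_right 0)"
    by (elim landau_o.bigE) auto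
  have "eventually (\<lambda>h. K h \<le> c' * h powr (-a)) (at_right 0)"
    using c'(2) eventually_at_right_less[of 0]
    by eventually_elim (use Kp in auto)
  then show "\<exists>c. eventually (\<lambda>h. K h \<le> c * h powr (-a)) (at_right 0)" by blast
qed

lemma acc_opt:
  "(\<forall>a b. 0 < a \<and> a < 1 \<and> 0 < b \<and> b < 2 \<longrightarrow>
        acc_order a b \<le> acc_order (1/3) (4/3)
        \<and> (acc_order a b = acc_order (1/3) (4/3) \<longrightarrow> a = 1/3 \<and> b = 4/3))
   \<and> acc_order (1/3) (4/3) = 2/3"
  unfolding acc_order_def by (auto simp: min_def)

lemma three_powr: "(\<lambda>h::real. h powr (2/3) + h powr (2/3) + h powr (2/3)) \<in> O[at_right 0](\<lambda>h. h powr (2/3))"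
  by (intro bigoI[of _ 3]) simp


theorem mainTheorem11:
  fixes \<phi> :: "real \<Rightarrow> real" and U :: "real set" and x :: real
    and K L :: "real \<Rightarrow> real" and \<alpha> \<beta> :: real
  assumes x_in: "x \<in> {-1<..<1}"
    and U_open: "open U" and x_U: "x \<in> U" and \<phi>_smooth: "smooth_on \<phi> U"
    and \<alpha>_range: "0 < \<alpha>" "\<alpha> < 1" and \<beta>_range: "0 < \<beta>" "\<beta> < 2"
    and K_pos: "\<forall>h>0. K h > 0" and L_pos: "\<forall>h>0. L h > 0"
    and K_order: "K \<in> \<Theta>[at_right 0](\<lambda>h. h powr (-\<alpha>))"
    and L_order: "L \<in> \<Theta>[at_right 0](\<lambda>h. h powr (-\<beta>))"
    and KL: "\<forall>h>0. K h * sqrt (L h) \<ge> 1"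
  shows
    \<comment> \<open>consistency with F^{1D}: for every smooth test function and point of the domain\<close>
    "(\<forall>\<psi> V z. open V \<and> z \<in> V \<and> z \<in> {-1<..<1} \<and> smooth_on \<psi> V \<longrightarrow>
        ((\<lambda>(h, y). Fscheme (K h) (L h) h \<psi> y) \<longlongrightarrow> F1D \<psi> z) (at_right 0 \<times>\<^sub>F nhds z))
   \<and> \<comment> \<open>accuracy\<close>
     (\<lambda>h. Fscheme (K h) (L h) h \<phi> x - F1D \<phi> x)
        \<in> O[at_right 0](\<lambda>h. h powr (1 - \<alpha>) + h powr (2 - \<beta>) + h powr (min (2 * \<alpha>) (\<beta> / 2)))
   \<and> \<comment> \<open>optimal choice alpha = 1/3, beta = 4/3 maximizes the order, giving order 2/3\<close>
     (\<forall>a b. 0 < a \<and> a < 1 \<and> 0 < b \<and> b < 2 \<longrightarrow>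
        acc_order a b \<le> acc_order (1/3) (4/3)
        \<and> (acc_order a b = acc_order (1/3) (4/3) \<longrightarrow> a = 1/3 \<and> b = 4/3))
   \<and> acc_order (1/3) (4/3) = 2/3
   \<and> (\<alpha> = 1/3 \<and> \<beta> = 4/3 \<longrightarrow>
        (\<lambda>h. Fscheme (K h) (L h) h \<phi> x - F1D \<phi> x) \<in> O[at_right 0](\<lambda>h. h powr (2/3)))"
  proof -
  obtain cK where Kb: "eventually (\<lambda>h. K h \<le> cK * h powr (-\<alpha>)) (at_right 0)"
    using theta_facts(2)[OF K_pos \<alpha>_range(1) K_order] by blast
  have Kt: "filterlim K at_top (at_right 0)" using theta_facts(1)[OF K_pos \<alpha>_range(1) K_order] .
  obtain cL where Lb: "eventually (\<lambda>h. L h \<le> cL * h powr (-\<beta>)) (at_right 0)"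
    using theta_facts(2)[OF L_pos \<beta>_range(1) L_order] by blast
  have Lt: "filterlim L at_top (at_right 0)" using theta_facts(1)[OF L_pos \<beta>_range(1) L_order] .
  have cons: "\<forall>\<psi> V z. open V \<and> z \<in> V \<and> z \<in> {-1<..<1} \<and> smooth_on \<psi> V \<longrightarrow>
        ((\<lambda>(h, y). Fscheme (K h) (L h) h \<psi> y) \<longlongrightarrow> F1D \<psi> z) (at_right 0 \<times>\<^sub>F nhds z)"
    using consistency[OF K_pos L_pos Kt Lt] by blast
  have acc: "(\<lambda>h. Fscheme (K h) (L h) h \<phi> x - F1D \<phi> x)
        \<in> O[at_right 0](\<lambda>h. h powr (1 - \<alpha>) + h powr (2 - \<beta>) + h powr (min (2 * \<alpha>) (\<beta> / 2)))"
    by (rule accuracy[OF K_pos L_pos Kt Lt Kb Lb \<alpha>_range(2) \<alpha>_range(1) \<phi>_smooth U_open x_U])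
  have last: "\<alpha> = 1/3 \<and> \<beta> = 4/3 \<longrightarrow>
        (\<lambda>h. Fscheme (K h) (L h) h \<phi> x - F1D \<phi> x) \<in> O[at_right 0](\<lambda>h. h powr (2/3))"
  proof
    assume ab: "\<alpha> = 1/3 \<and> \<beta> = 4/3"
    have eq: "(\<lambda>h::real. h powr (1 - \<alpha>) + h powr (2 - \<beta>) + h powr (min (2 * \<alpha>) (\<beta> / 2)))
        = (\<lambda>h. h powr (2/3) + h powr (2/3) + h powr (2/3))"
    proof -
      have a1: "\<alpha> = 1/3" and b1: "\<beta> = 4/3" using ab by auto
      show ?thesis unfolding a1 b1 by simp
    qed
    show "(\<lambda>h. Fscheme (K h) (L h) h \<phi> x - F1D \<phi> x) \<in> O[at_right 0](\<lambda>h. h powr (2/3))"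
      using landau_o.big_trans[OF acc[unfolded eq] three_powr] .
  qed
  show ?thesis using cons acc acc_opt last by blast
qed

end
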